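(* Let $\alpha>0$, $\theta>1$ be fixed reals, let $k\ge2$ be an integer and let $\rho$ be a positive real with $\rho<(k+3)^{-1}$. Let $N,\xi$ be reals with \[N^{3\rho-k}<\lvert\xi\rvert\le N^{\rho-\theta}.\] Then, provided $N$ is sufficiently large, there exist coprime $a,b\in\mathbb{Z}$ with \[\Big\lvert\xi\alpha-\frac ab\Big\rvert\le b^{-2}\quad\text{and}\quad N^{2\rho}\le b\le N^{k-2\rho}.\] *)

theory Defs
  imports Complex_Main
begin

end

theory Submission
  imports Defs "HOL-Analysis.Kronecker_Approximation_Theorem"
begin

lemma pw: fixes c r N :: real assumes "c > 0" "r > 0" "N \<ge> c powr (1/r)" shows "N powr r \<ge> c"
proof -
  have "c = (c powr (1/r)) powr r" using assms by (simp add: powr_powr)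
  also have "\<dots> \<le> N powr r" using assms by (intro powr_mono2) auto
  finally show ?thesis .
qed

lemma pw2: "(b::int) > 0 \<Longrightarrow> real_of_int b powr (-2) = 1 / (real_of_int b)^2"
proof -
  assume b: "b > 0"
  have "real_of_int b powr (-2) = inverse (real_of_int b powr 2)" by (rule powr_minus)
  also have "real_of_int b powr 2 = (real_of_int b)^2" using b by (intro powr_numeral) simp
  finally show ?thesis by (simp only: inverse_eq_divide)
qed

theorem lemma5p6:
  fixes \<alpha> \<theta> \<rho> :: real and k :: nat
  assumes "\<alpha> > 0" and "\<theta> > 1" and "k \<ge> 2"
    and "\<rho> > 0" and "\<rho> < 1 / (real k + 3)"
  shows "\<exists>N0::real. \<forall>N \<xi>::real. N \<ge> N0 \<longrightarrow>
           N powr (3 * \<rho> - real k) < \<bar>\<xi>\<bar> \<longrightarrow> \<bar>\<xi>\<bar> \<le> N powr (\<rho> - \<theta>) \<longrightarrow>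
           (\<exists>a b :: int. coprime a b \<and>
              \<bar>\<xi> * \<alpha> - real_of_int a / real_of_int b\<bar> \<le> real_of_int b powr (-2) \<and>
              N powr (2 * \<rho>) \<le> real_of_int b \<and> real_of_int b \<le> N powr (real k - 2 * \<rho>))"
proof -
  have rk: "\<rho> * (real k + 3) < 1" using assms(4,5)
    by (simp add: field_simps)
  have r5: "\<rho> < 1/5"
  proof -
    have "\<rho> * 5 \<le> \<rho> * (real k + 3)" using assms(3,4) by (intro mult_left_mono) auto
    thus ?thesis using rk by linarith
  qed
  have kpos: "real k - 2 * \<rho> > 0" using r5 assms(3) by linarith
  have tpos: "\<theta> - 3 * \<rho> > 0" using r5 assms(2) by linarith
  define N0 where "N0 = max 1 (max (3 powr (1/(real k - 2*\<rho>)))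
       (max ((2/\<alpha>) powr (1/\<rho>)) ((2*\<alpha>) powr (1/(\<theta> - 3*\<rho>)))))"
  show ?thesis
  proof (rule exI[of _ N0], intro allI impI)
    fix N \<xi> :: real
    assume N: "N \<ge> N0" and lo: "N powr (3 * \<rho> - real k) < \<bar>\<xi>\<bar>"
      and hi: "\<bar>\<xi>\<bar> \<le> N powr (\<rho> - \<theta>)"
    have N1: "N \<ge> 1" using N unfolding N0_def by linarith
    define Q where "Q = N powr (real k - 2*\<rho>)"
    have Q3: "Q \<ge> 3" unfolding Q_def using N kpos by (intro pw) (auto simp: N0_def)
    have A2: "N powr \<rho> \<ge> 2/\<alpha>" using N assms(1,4) by (intro pw) (auto simp: N0_def)
    have T2: "N powr (\<theta> - 3*\<rho>) \<ge> 2*\<alpha>" using N assms(1) tpos by (intro pw) (auto simp: N0_def)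
    define x where "x = \<xi> * \<alpha>"
    define M where "M = nat \<lfloor>Q\<rfloor>"
    have MQ: "real M \<le> Q" "real M \<ge> Q - 1" using Q3 unfolding M_def by linarith+
    have M3: "M \<ge> 3" using Q3 unfolding M_def by linarith
    obtain h b where hb: "coprime h b" "0 < b" "b \<le> int M"
        "\<bar>of_int b * x - of_int h\<bar> < 1/M"
      using Dirichlet_approx_coprime[of M x] M3 by auto
    have bpos: "real_of_int b > 0" using hb by simp
    have bM: "real_of_int b \<le> real M" using hb by linarith
    have eq: "\<bar>x - h/b\<bar> = \<bar>of_int b * x - of_int h\<bar> / b"
    proof -
      have "x - h/b = (b*x - h)/b" using bpos by (simp add: field_simps)
      thus ?thesis using bpos by (simp add: abs_divide)
    qed
    have "\<bar>x - h/b\<bar> \<le> 1/(real M * b)"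
    proof -
      have "\<bar>of_int b * x - of_int h\<bar> / b \<le> (1/M) / b"
        using hb(4) bpos by (intro divide_right_mono) auto
      thus ?thesis using eq by simp
    qed
    also have "\<dots> \<le> 1 / (real_of_int b)^2"
    proof (rule frac_le)
      have "real_of_int b * b \<le> real M * b" using bM bpos by (intro mult_right_mono) auto
      thus "(real_of_int b)^2 \<le> real M * b" by (simp add: power2_eq_square)
    qed (use bpos in auto)
    also have "\<dots> = real_of_int b powr (-2)"
      using hb(2) by (rule pw2[symmetric])
    finally have approx: "\<bar>x - h/b\<bar> \<le> real_of_int b powr (-2)" .
    have upper: "real_of_int b \<le> N powr (real k - 2 * \<rho>)" using bM MQ unfolding Q_def by linarith
    have lower: "N powr (2 * \<rho>) \<le> real_of_int b"
    proof (rule ccontr)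
      assume "\<not> ?thesis"
      hence bs: "real_of_int b < N powr (2*\<rho>)" by simp
      have xab: "\<bar>x\<bar> = \<bar>\<xi>\<bar> * \<alpha>" using assms(1) x_def by (simp add: abs_mult)
      show False
      proof (cases "h = 0")
        case True
        have "\<bar>x\<bar> * b < 1/M" using hb(4) True bpos by (simp add: abs_mult mult.commute)
        moreover have "\<bar>x\<bar> \<le> \<bar>x\<bar> * b"
        proof -
          have "real_of_int b \<ge> 1" using hb(2) by simp
          thus ?thesis by (simp add: mult_le_cancel_left1)
        qed
        ultimately have "\<bar>x\<bar> < 1/M" by linarith
        also have "1/M \<le> 2/Q" using MQ Q3 by (simp add: field_simps)
        finally have x1: "\<bar>x\<bar> < 2/Q" .
        have "N powr (3 * \<rho> - real k) = N powr \<rho> / Q"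
          unfolding Q_def using N1 by (simp add: powr_diff[symmetric] algebra_simps)
        hence "N powr \<rho> / Q < \<bar>\<xi>\<bar>" using lo by simp
        hence "\<bar>\<xi>\<bar> * \<alpha> > N powr \<rho> / Q * \<alpha>" by (rule mult_strict_right_mono[OF _ assms(1)])
        moreover have "N powr \<rho> / Q * \<alpha> \<ge> 2/Q" using A2 assms(1) Q3
          by (simp add: field_simps)
        ultimately show False using x1 xab by linarith
      next
        case False
        hence "\<bar>real_of_int h\<bar> \<ge> 1" by linarith
        moreover have "1/real M \<le> 1/2" using M3 by simp
        ultimately have "\<bar>of_int b * x\<bar> \<ge> 1/2" using hb(4) by linarith
        hence "real_of_int b * \<bar>x\<bar> \<ge> 1/2" using bpos by (simp add: abs_mult)
        hence "\<bar>x\<bar> \<ge> 1/(2*b)" using bpos by (simp add: field_simps)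
        moreover have "1/(2*b) > 1/(2 * N powr (2*\<rho>))" using bs bpos by (simp add: frac_less2)
        moreover have "\<bar>x\<bar> \<le> \<alpha> * N powr (\<rho> - \<theta>)" using hi xab assms(1) by (simp add: mult.commute)
        moreover have "N powr (\<rho> - \<theta>) = 1 / (N powr (\<theta> - 3*\<rho>) * N powr (2*\<rho>))"
          using N1 by (simp add: powr_add[symmetric] powr_minus[symmetric] divide_inverse algebra_simps)
        moreover have "\<alpha> / (N powr (\<theta> - 3*\<rho>) * N powr (2*\<rho>)) \<le> 1/(2 * N powr (2*\<rho>))"
          using T2 assms(1) N1 by (simp add: field_simps)
        ultimately show False by simp
      qed
    qed
    show "\<exists>a b :: int. coprime a b \<and>
              \<bar>\<xi> * \<alpha> - real_of_int a / real_of_int b\<bar> \<le> real_of_int b powr (-2) \<and>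
              N powr (2 * \<rho>) \<le> real_of_int b \<and> real_of_int b \<le> N powr (real k - 2 * \<rho>)"
      using hb(1) approx lower upper x_def by blast
  qed
qed

end
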